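(* Let $X=\{X(t),\ t\ge0\}$ and $Z=\{Z(t),\ t\ge0\}$ be stochastic processes such that $Z(t)$ is nondegenerate for every $t>0$, and suppose that for some positive constants $a_T$ with $a_T\to\infty$, $$\left\{\frac{X(Tt)}{a_T}\right\}_{t\ge0}\ \xrightarrow{fdd}\ \{Z(t)\}_{t\ge0}\quad\text{as } T\to\infty,$$ where $\xrightarrow{fdd}$ denotes convergence of all finite-dimensional distributions. Let $\mathcal{Q}$ be the set of $q\in\mathbb{R}$ such that $$\frac{\mathbb{E}|X(Tt)|^q}{a_T^q}\to\mathbb{E}|Z(t)|^q\quad\text{as }T\to\infty,\ \text{ for all } t\ge 0.$$ Then: (i) If $0<r<s$, $\mathbb{E}|Z(1)|^s<\infty$ and $s\in\mathcal{Q}$, then $r\in\mathcal{Q}$. (ii) If $s<r<0$, $\mathbb{E}|Z(1)|^s<\infty$ and $s\in\mathcal{Q}$, then $r\in\mathcal{Q}$. *)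

theory Defs
  imports "HOL-Probability.Probability"
begin

definition abs_pow :: "real \<Rightarrow> real \<Rightarrow> ennreal" where
  "abs_pow x q = (if x = 0 then (if q < 0 then \<infinity> else if q = 0 then 1 else 0)
                  else ennreal (\<bar>x\<bar> powr q))"

definition abs_moment :: "'a measure \<Rightarrow> ('a \<Rightarrow> real) \<Rightarrow> real \<Rightarrow> ennreal" where
  "abs_moment M Y q = (\<integral>\<^sup>+ \<omega>. abs_pow (Y \<omega>) q \<partial>M)"

definition nondegenerate :: "'a measure \<Rightarrow> ('a \<Rightarrow> real) \<Rightarrow> bool" where
  "nondegenerate M Y \<longleftrightarrow> \<not> (\<exists>c. AE \<omega> in M. Y \<omega> = c)"

text \<open>The law of an n-dimensional vector (Y_0,...,Y_{n-1}) is represented by the vector padded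
  with zeros in \<real>^\<nat> (product topology); weak convergence means convergence of expectations
  of every bounded continuous function.  Since padding is a closed embedding with
  continuous left inverse (the projection), this is exactly weak convergence in \<real>^n.\<close>
definition fdd_conv ::
  "'a measure \<Rightarrow> (real \<Rightarrow> 'a \<Rightarrow> real) \<Rightarrow> (real \<Rightarrow> real) \<Rightarrow> 'b measure \<Rightarrow> (real \<Rightarrow> 'b \<Rightarrow> real) \<Rightarrow> bool"
  where
  "fdd_conv M X a N Z \<longleftrightarrow>
    (\<forall>(n::nat) (t::nat \<Rightarrow> real) (g::(nat \<Rightarrow> real) \<Rightarrow> real).
       (\<forall>i<n. t i \<ge> 0) \<longrightarrow> continuous_on UNIV g \<longrightarrow> (\<exists>B. \<forall>y. \<bar>g y\<bar> \<le> B) \<longrightarrow>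
       ((\<lambda>T. \<integral>\<omega>. g (\<lambda>i. if i < n then X (T * t i) \<omega> / a T else 0) \<partial>M)
          \<longlongrightarrow> (\<integral>\<omega>. g (\<lambda>i. if i < n then Z (t i) \<omega> else 0) \<partial>N)) at_top)"

definition moment_conv_set ::
  "'a measure \<Rightarrow> (real \<Rightarrow> 'a \<Rightarrow> real) \<Rightarrow> (real \<Rightarrow> real) \<Rightarrow> 'b measure \<Rightarrow> (real \<Rightarrow> 'b \<Rightarrow> real) \<Rightarrow> real set"
  where
  "moment_conv_set M X a N Z = {q. \<forall>t\<ge>0.
     ((\<lambda>T. abs_moment M (X (T * t)) q / ennreal (a T powr q))
        \<longlongrightarrow> abs_moment N (Z t) q) at_top}"

end

theory Submission
  imports Defs
begin

lemma abs_pow_meas[measurable]: "(\<lambda>x. abs_pow x q) \<in> borel_measurable borel"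
  unfolding abs_pow_def by measurable

lemma abs_pow_pos_eq: "0 < r \<Longrightarrow> abs_pow y r = ennreal (\<bar>y\<bar> powr r)"
  by (simp add: abs_pow_def)

lemma abs_pow_zero_iff: "abs_pow y q = 0 \<Longrightarrow> y = 0"
  by (auto simp: abs_pow_def split: if_splits)

lemma abs_pow_div:
  assumes c: "c > 0"
  shows "abs_pow (x / c) q = abs_pow x q / ennreal (c powr q)"
proof (cases "x = 0")
  case True
  have "ennreal (c powr q) \<noteq> 0" "ennreal (c powr q) \<noteq> top" using c by auto
  then show ?thesis using True c by (auto simp: abs_pow_def ennreal_top_divide)
next
  case False
  then have "abs_pow (x / c) q = ennreal (\<bar>x\<bar> powr q / c powr q)"
    using c by (simp add: abs_pow_def powr_divide)
  also have "\<dots> = ennreal (\<bar>x\<bar> powr q) / ennreal (c powr q)"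
    using c by (simp add: divide_ennreal)
  finally show ?thesis using False by (simp add: abs_pow_def)
qed

lemma abs_pow_mult:
  assumes c: "c > 0"
  shows "abs_pow (c * x) q = ennreal (c powr q) * abs_pow x q"
proof (cases "x = 0")
  case True
  have "ennreal (c powr q) \<noteq> 0" using c by auto
  then show ?thesis using True c by (auto simp: abs_pow_def ennreal_mult_top)
next
  case False
  then show ?thesis using c by (simp add: abs_pow_def powr_mult abs_mult ennreal_mult)
qed

definition trunc :: "real \<Rightarrow> real \<Rightarrow> real \<Rightarrow> real" where
  "trunc r K y = (if 0 < r then min (\<bar>y\<bar> powr r) K else inverse (max (\<bar>y\<bar> powr (-r)) (inverse K)))"

lemma trunc_cont:
  assumes "r \<noteq> 0" "K > 0"
  shows "continuous_on UNIV (trunc r K)"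
proof (cases "0 < r")
  case True
  have "continuous_on UNIV (\<lambda>y::real. \<bar>y\<bar> powr r)"
    using True by (intro continuous_on_powr') (auto intro!: continuous_intros)
  then show ?thesis using True unfolding trunc_def by (auto intro!: continuous_intros)
next
  case False
  then have "- r > 0" using assms by auto
  then have "continuous_on UNIV (\<lambda>y::real. \<bar>y\<bar> powr (-r))"
    by (intro continuous_on_powr') (auto intro!: continuous_intros)
  moreover have "max (\<bar>y\<bar> powr (-r)) (inverse K) \<noteq> 0" for y
    using assms by (metis inverse_positive_iff_positive less_max_iff_disj order_less_irrefl)
  ultimately show ?thesis using False unfolding trunc_def
    by (auto intro!: continuous_intros)
qed

lemma trunc_bound:
  assumes "K > 0"
  shows "0 \<le> trunc r K y" "trunc r K y \<le> K"
proof -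
  show "0 \<le> trunc r K y" using assms by (auto simp: trunc_def le_max_iff_disj)
  show "trunc r K y \<le> K"
  proof (cases "0 < r")
    case False
    have "inverse K \<le> max (\<bar>y\<bar> powr (-r)) (inverse K)" by simp
    then have "inverse (max (\<bar>y\<bar> powr (-r)) (inverse K)) \<le> inverse (inverse K)"
      using assms by (intro le_imp_inverse_le) auto
    then show ?thesis using False by (simp add: trunc_def)
  qed (auto simp: trunc_def)
qed

lemma ennreal_min': "ennreal (min a b) = min (ennreal a) (ennreal b)"
  by (cases "a \<le> b") (simp_all add: min_absorb1 min_absorb2 ennreal_leI)

lemma trunc_eq:
  assumes "r \<noteq> 0" "K > 0"
  shows "ennreal (trunc r K y) = min (abs_pow y r) (ennreal K)"
proof (cases "0 < r")
  case True
  then show ?thesis by (simp add: trunc_def abs_pow_pos_eq ennreal_min')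
next
  case False
  then have r: "r < 0" using assms by auto
  show ?thesis
  proof (cases "y = 0")
    case True
    then show ?thesis using r assms by (simp add: trunc_def abs_pow_def)
  next
    case False
    have p: "\<bar>y\<bar> powr r > 0" using False by simp
    have "\<bar>y\<bar> powr (-r) = inverse (\<bar>y\<bar> powr r)" by (simp add: powr_minus)
    then have "inverse (max (\<bar>y\<bar> powr (-r)) (inverse K)) = min (\<bar>y\<bar> powr r) K"
      using p assms by (cases "\<bar>y\<bar> powr r \<le> K") (auto simp: max_def min_def le_imp_inverse_le)
    then show ?thesis using False r by (simp add: trunc_def abs_pow_def ennreal_min')
  qed
qed

lemma powr_key:
  fixes b K r s :: real
  assumes b: "b > 0" and K: "K > 0" and r: "r \<noteq> 0" and bK: "b powr r > K" and e: "1 - s / r \<le> 0"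
  shows "b powr r \<le> K powr (1 - s / r) * b powr s"
proof -
  define p where "p = b powr r"
  have p: "p > 0" "K \<le> p" using bK K by (auto simp: p_def)
  have bs: "b powr s = p powr (s / r)" using r b by (simp add: p_def powr_powr)
  have "p powr (1 - s / r) \<le> K powr (1 - s / r)" using powr_mono2'[OF e K p(2)] by simp
  then have "p powr (1 - s / r) * p powr (s / r) \<le> K powr (1 - s / r) * p powr (s / r)"
    by (intro mult_right_mono) auto
  also have "p powr (1 - s / r) * p powr (s / r) = p"
    using p by (simp add: powr_add[symmetric])
  finally show ?thesis using bs by (simp add: p_def)
qed

lemma rs_facts:
  fixes r s :: real
  assumes "(0 < r \<and> r < s) \<or> (s < r \<and> r < 0)"
  shows "r \<noteq> 0" "s \<noteq> 0" "1 - s / r < 0" "(0 < r) = (0 < s)"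
proof -
  show "r \<noteq> 0" using assms by auto
  show "s \<noteq> 0" using assms by auto
  show "(0 < r) = (0 < s)" using assms by arith
  have "s / r > 1" using assms by (auto simp: less_divide_eq_1 divide_less_eq_1)
  then show "1 - s / r < 0" by simp
qed

lemma trunc_ineq:
  assumes rs: "(0 < r \<and> r < s) \<or> (s < r \<and> r < 0)" and K: "K > 0"
  shows "abs_pow y r \<le> ennreal (trunc r K y) + ennreal (K powr (1 - s / r)) * abs_pow y s"
proof (cases "abs_pow y r \<le> ennreal K")
  case True
  then have "ennreal (trunc r K y) = abs_pow y r" using trunc_eq[OF rs_facts(1)[OF rs] K] by simp
  then show ?thesis by simp
next
  case False
  note f = rs_facts[OF rs]
  show ?thesis
  proof (cases "y = 0")
    case True
    then have "r < 0" "s < 0" using False f by (auto simp: abs_pow_def split: if_splits)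
    then have "abs_pow y s = \<infinity>" using True by (simp add: abs_pow_def)
    moreover have "ennreal (K powr (1 - s / r)) \<noteq> 0" using K by simp
    ultimately show ?thesis by (simp add: ennreal_mult_top)
  next
    case y: False
    then have "ennreal K < ennreal (\<bar>y\<bar> powr r)" using False by (simp add: abs_pow_def)
    then have "K < \<bar>y\<bar> powr r" using K by (subst (asm) ennreal_less_iff) auto
    then have "\<bar>y\<bar> powr r \<le> K powr (1 - s / r) * \<bar>y\<bar> powr s"
      using powr_key[of "\<bar>y\<bar>" K r s] y K f by simp
    then have "abs_pow y r \<le> ennreal (K powr (1 - s / r)) * abs_pow y s"
      using y by (simp add: abs_pow_def ennreal_mult[symmetric] ennreal_leI)
    then show ?thesis by (simp add: add_increasing)
  qed
qed

lemma trunc_meas[measurable]: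
  assumes "r \<noteq> 0" "K > 0"
  shows "trunc r K \<in> borel_measurable borel"
  using trunc_cont[OF assms] by (rule borel_measurable_continuous_onI)

lemma SUP_min_nat: "(SUP n. min x (ennreal (real (Suc n)))) = (x::ennreal)"
proof (rule antisym)
  show "(SUP n. min x (ennreal (real (Suc n)))) \<le> x" by (rule SUP_least) simp
next
  show "x \<le> (SUP n. min x (ennreal (real (Suc n))))"
  proof (cases x)
    case (real q)
    obtain n :: nat where "q \<le> real n" using real_nat_ceiling_ge by blast
    then have "x \<le> ennreal (real (Suc n))" using real \<open>q \<le> real n\<close> by (simp only:) (rule ennreal_leI, simp)
    then have "min x (ennreal (real (Suc n))) = x" by (rule min_absorb1)
    then show ?thesis by (metis SUP_upper2 UNIV_I order_refl)
  next
    case top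
    have "(SUP n. ennreal (real (Suc n))) = top"
    proof (rule SUP_eq_top_iff[THEN iffD2], intro allI impI)
      fix z :: ennreal assume "z < top"
      then obtain q where q: "z = ennreal q" "0 \<le> q" by (cases z) auto
      obtain n :: nat where "q < real n" using reals_Archimedean2 by blast
      then have "q < real (Suc n)" by simp
      then have "z < ennreal (real (Suc n))" using q by (simp only: ennreal_less_iff of_nat_0_le_iff)
      then show "\<exists>i\<in>UNIV. z < ennreal (real (Suc i))" by blast
    qed
    moreover have "(SUP n. min x (ennreal (real (Suc n)))) = (SUP n. ennreal (real (Suc n)))"
      using top by (simp only: min_top)
    ultimately show ?thesis by (simp only: top_greatest)
  qed
qed

definition wconv :: "'a measure \<Rightarrow> (real \<Rightarrow> 'a \<Rightarrow> real) \<Rightarrow> 'b measure \<Rightarrow> ('b \<Rightarrow> real) \<Rightarrow> bool" where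
  "wconv M Y N W \<longleftrightarrow> (\<forall>(h::real\<Rightarrow>real) B. continuous_on UNIV h \<longrightarrow> (\<forall>y. \<bar>h y\<bar> \<le> B) \<longrightarrow>
     ((\<lambda>T. \<integral>\<omega>. h (Y T \<omega>) \<partial>M) \<longlongrightarrow> (\<integral>\<omega>. h (W \<omega>) \<partial>N)) at_top)"

lemma fdd1:
  fixes h :: "real \<Rightarrow> real"
  assumes "fdd_conv M X a N Z" "t \<ge> 0" "continuous_on UNIV h" "\<And>y. \<bar>h y\<bar> \<le> B"
  shows "((\<lambda>T. \<integral>\<omega>. h (X (T * t) \<omega> / a T) \<partial>M) \<longlongrightarrow> (\<integral>\<omega>. h (Z t \<omega>) \<partial>N)) at_top"
proof -
  have c: "continuous_on UNIV (\<lambda>y::nat\<Rightarrow>real. h (y 0))"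
    by (rule continuous_on_compose2[OF assms(3) continuous_on_product_coordinates]) auto
  have b: "\<exists>B. \<forall>y::nat\<Rightarrow>real. \<bar>h (y 0)\<bar> \<le> B" using assms(4) by blast
  show ?thesis
    using assms(1)[unfolded fdd_conv_def, rule_format, of 1 "\<lambda>_. t" "\<lambda>y. h (y 0)", OF _ c b] assms(2)
    by simp
qed

lemma fdd_wconv:
  assumes "fdd_conv M X a N Z" "t \<ge> 0"
  shows "wconv M (\<lambda>T \<omega>. X (T * t) \<omega> / a T) N (Z t)"
  unfolding wconv_def using fdd1[OF assms] by blast

lemma fdd1_comp:
  fixes h :: "real \<Rightarrow> real"
  assumes "fdd_conv M X a N Z" "t > 0" "continuous_on UNIV h" "\<And>y. \<bar>h y\<bar> \<le> B"
  shows "((\<lambda>T. \<integral>\<omega>. h (X (T * t) \<omega> / a (T * t)) \<partial>M) \<longlongrightarrow> (\<integral>\<omega>. h (Z 1 \<omega>) \<partial>N)) at_top"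
proof -
  have f: "filterlim (\<lambda>T. T * t) at_top at_top"
    using assms(2) by (intro filterlim_at_top_mult_tendsto_pos[OF tendsto_const]) (auto simp: filterlim_ident)
  show ?thesis
    using filterlim_compose[OF fdd1[OF assms(1) _ assms(3,4), of 1] f] by simp
qed

lemma main_lemma:
  fixes Y :: "real \<Rightarrow> 'a \<Rightarrow> real" and W :: "'b \<Rightarrow> real"
  assumes PM: "prob_space M" and PN: "prob_space N"
    and Ymeas: "\<forall>\<^sub>F T in at_top. Y T \<in> borel_measurable M"
    and Wmeas[measurable]: "W \<in> borel_measurable N"
    and conv: "wconv M Y N W"
    and rs: "(0 < r \<and> r < s) \<or> (s < r \<and> r < 0)"
    and mom: "((\<lambda>T. \<integral>\<^sup>+\<omega>. abs_pow (Y T \<omega>) s \<partial>M) \<longlongrightarrow> (\<integral>\<^sup>+\<omega>. abs_pow (W \<omega>) s \<partial>N)) at_top"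
    and fin: "(\<integral>\<^sup>+\<omega>. abs_pow (W \<omega>) s \<partial>N) < \<infinity> \<or> (\<integral>\<^sup>+\<omega>. abs_pow (W \<omega>) r \<partial>N) = \<infinity>"
  shows "((\<lambda>T. \<integral>\<^sup>+\<omega>. abs_pow (Y T \<omega>) r \<partial>M) \<longlongrightarrow> (\<integral>\<^sup>+\<omega>. abs_pow (W \<omega>) r \<partial>N)) at_top"
proof -
  interpret M: prob_space M by (rule PM)
  interpret N: prob_space N by (rule PN)
  note f = rs_facts[OF rs]
  define F where "F = (\<integral>\<^sup>+\<omega>. abs_pow (W \<omega>) r \<partial>N)"
  define Phi where "Phi = (\<integral>\<^sup>+\<omega>. abs_pow (W \<omega>) s \<partial>N)"
  have nnY: "(\<integral>\<^sup>+\<omega>. ennreal (trunc r K (V \<omega>)) \<partial>M) = ennreal (\<integral>\<omega>. trunc r K (V \<omega>) \<partial>M)"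
    if "K > 0" "V \<in> borel_measurable M" for K V
  proof -
    have "integrable M (\<lambda>\<omega>. trunc r K (V \<omega>))"
      using that trunc_bound[OF that(1)] f(1)
      by (intro M.integrable_const_bound[where B=K]) (auto intro: measurable_compose[OF _ trunc_meas])
    then show ?thesis using trunc_bound[OF that(1)] by (intro nn_integral_eq_integral) auto
  qed
  have nnW: "(\<integral>\<^sup>+\<omega>. ennreal (trunc r K (W \<omega>)) \<partial>N) = ennreal (\<integral>\<omega>. trunc r K (W \<omega>) \<partial>N)"
    if "K > 0" for K
  proof -
    have "integrable N (\<lambda>\<omega>. trunc r K (W \<omega>))"
      using that trunc_bound[OF that(1)] f(1)
      by (intro N.integrable_const_bound[where B=K]) (auto intro: measurable_compose[OF _ trunc_meas])
    then show ?thesis using trunc_bound[OF that(1)] by (intro nn_integral_eq_integral) auto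
  qed
  have trconv: "((\<lambda>T. \<integral>\<^sup>+\<omega>. ennreal (trunc r K (Y T \<omega>)) \<partial>M) \<longlongrightarrow> (\<integral>\<^sup>+\<omega>. ennreal (trunc r K (W \<omega>)) \<partial>N)) at_top"
    if K: "K > 0" for K
  proof -
    have "((\<lambda>T. \<integral>\<omega>. trunc r K (Y T \<omega>) \<partial>M) \<longlongrightarrow> (\<integral>\<omega>. trunc r K (W \<omega>) \<partial>N)) at_top"
      using conv trunc_cont[OF f(1) K] trunc_bound[OF K] unfolding wconv_def
      by (metis abs_of_nonneg)
    then have "((\<lambda>T. ennreal (\<integral>\<omega>. trunc r K (Y T \<omega>) \<partial>M)) \<longlongrightarrow> ennreal (\<integral>\<omega>. trunc r K (W \<omega>) \<partial>N)) at_top"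
      by (rule tendsto_ennrealI)
    moreover have "\<forall>\<^sub>F T in at_top. ennreal (\<integral>\<omega>. trunc r K (Y T \<omega>) \<partial>M) = (\<integral>\<^sup>+\<omega>. ennreal (trunc r K (Y T \<omega>)) \<partial>M)"
      using Ymeas by eventually_elim (simp add: nnY[OF K])
    ultimately show ?thesis unfolding nnW[OF K] by (rule tendsto_cong[THEN iffD1, rotated])
  qed
  have trle: "(\<integral>\<^sup>+\<omega>. ennreal (trunc r K (V \<omega>)) \<partial>P) \<le> (\<integral>\<^sup>+\<omega>. abs_pow (V \<omega>) r \<partial>P)"
    if "K > 0" for K V and P :: "'c measure"
    by (intro nn_integral_mono) (simp add: trunc_eq[OF f(1) that])
  show ?thesis
  proof (rule order_tendstoI)
    fix l assume l: "l < (\<integral>\<^sup>+\<omega>. abs_pow (W \<omega>) r \<partial>N)"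
    have "(\<integral>\<^sup>+\<omega>. abs_pow (W \<omega>) r \<partial>N) = (\<integral>\<^sup>+\<omega>. (SUP n. ennreal (trunc r (real (Suc n)) (W \<omega>))) \<partial>N)"
      by (simp add: trunc_eq[OF f(1)] SUP_min_nat del: of_nat_Suc)
    also have "\<dots> = (SUP n. \<integral>\<^sup>+\<omega>. ennreal (trunc r (real (Suc n)) (W \<omega>)) \<partial>N)"
    proof (rule nn_integral_monotone_convergence_SUP)
      show "incseq (\<lambda>n \<omega>. ennreal (trunc r (real (Suc n)) (W \<omega>)))"
      proof (unfold incseq_def le_fun_def, intro allI impI)
        fix m n :: nat and \<omega> assume "m \<le> n"
        then have "min (abs_pow (W \<omega>) r) (ennreal (real (Suc m))) \<le> min (abs_pow (W \<omega>) r) (ennreal (real (Suc n)))"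
          by (intro min.mono order_refl ennreal_leI) simp
        then show "ennreal (trunc r (real (Suc m)) (W \<omega>)) \<le> ennreal (trunc r (real (Suc n)) (W \<omega>))"
          by (simp only: trunc_eq[OF f(1)] of_nat_0_less_iff zero_less_Suc)
      qed
      show "(\<lambda>\<omega>. ennreal (trunc r (real (Suc n)) (W \<omega>))) \<in> borel_measurable N" for n
        using trunc_meas[OF f(1), of "real (Suc n)"] by (auto intro!: measurable_compose[OF Wmeas] simp del: of_nat_Suc)
    qed
    finally obtain n where n: "l < (\<integral>\<^sup>+\<omega>. ennreal (trunc r (real (Suc n)) (W \<omega>)) \<partial>N)"
      using l by (auto simp: less_SUP_iff simp del: of_nat_Suc)
    have "\<forall>\<^sub>F T in at_top. l < (\<integral>\<^sup>+\<omega>. ennreal (trunc r (real (Suc n)) (Y T \<omega>)) \<partial>M)"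
      using order_tendstoD(1)[OF trconv n] by simp
    then show "\<forall>\<^sub>F T in at_top. l < (\<integral>\<^sup>+\<omega>. abs_pow (Y T \<omega>) r \<partial>M)"
      by eventually_elim (rule less_le_trans, assumption, rule trle, simp)
  next
    fix u assume u: "(\<integral>\<^sup>+\<omega>. abs_pow (W \<omega>) r \<partial>N) < u"
    then have Ffin: "F < \<infinity>" unfolding F_def using top.not_eq_extremum by fastforce
    then have Phifin: "Phi < \<infinity>" using fin unfolding F_def Phi_def by auto
    obtain v where v: "F < v" "v < u" using u dense unfolding F_def by blast
    then have vfin: "v < \<infinity>" using top.not_eq_extremum by fastforce
    define Fr where "Fr = enn2real F"
    define Pr where "Pr = enn2real Phi"
    define \<epsilon> where "\<epsilon> = enn2real v - Fr"
    have FFr: "F = ennreal Fr" using Ffin unfolding Fr_def by (simp add: less_top ennreal_enn2real)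
    have PPr: "Phi = ennreal Pr" using Phifin unfolding Pr_def by (simp add: less_top ennreal_enn2real)
    have Pr0: "Pr \<ge> 0" unfolding Pr_def by simp
    have Fr0: "Fr \<ge> 0" unfolding Fr_def by simp
    have vv: "v = ennreal (Fr + \<epsilon>)" using vfin unfolding \<epsilon>_def by (simp add: less_top ennreal_enn2real)
    have eps: "\<epsilon> > 0" using v(1) vv FFr Fr0 by (auto simp: ennreal_less_iff)
    define e where "e = 1 - s / r"
    have e: "e < 0" using f(3) unfolding e_def .
    define c where "c = \<epsilon> / (2 * (Pr + 1))"
    have c: "c > 0" using eps Pr0 unfolding c_def by auto
    define K where "K = c powr (1 / e)"
    have K: "K > 0" using c unfolding K_def by simp
    have Kc: "K powr e = c" using c e unfolding K_def by (simp add: powr_powr)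
    have cPr: "c * Pr < \<epsilon>"
    proof -
      have "c * Pr = \<epsilon> * (Pr / (2 * (Pr + 1)))" unfolding c_def by (simp add: field_simps)
      also have "\<dots> < \<epsilon> * 1" using eps Pr0 by (intro mult_strict_left_mono) (auto simp: field_simps)
      finally show ?thesis by simp
    qed
    define L where "L = (\<integral>\<^sup>+\<omega>. ennreal (trunc r K (W \<omega>)) \<partial>N) + ennreal c * Phi"
    have trW: "(\<integral>\<^sup>+\<omega>. ennreal (trunc r K (W \<omega>)) \<partial>N) \<le> F"
      unfolding F_def by (rule trle[OF K])
    have "L \<le> ennreal Fr + ennreal (c * Pr)"
      unfolding L_def PPr using trW FFr c Pr0
      by (intro add_mono) (auto simp: F_def ennreal_mult)
    also have "\<dots> = ennreal (Fr + c * Pr)" using Fr0 c Pr0 by (simp add: ennreal_plus)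
    also have "\<dots> < v" unfolding vv using cPr Fr0 c Pr0 by (subst ennreal_less_iff) auto
    finally have Lu: "L < u" using v(2) by simp
    have lim: "((\<lambda>T. (\<integral>\<^sup>+\<omega>. ennreal (trunc r K (Y T \<omega>)) \<partial>M) + ennreal c * (\<integral>\<^sup>+\<omega>. abs_pow (Y T \<omega>) s \<partial>M)) \<longlongrightarrow> L) at_top"
      unfolding L_def Phi_def by (intro tendsto_add trconv[OF K] ennreal_tendsto_cmult mom) auto
    have "\<forall>\<^sub>F T in at_top. (\<integral>\<^sup>+\<omega>. abs_pow (Y T \<omega>) r \<partial>M) \<le> (\<integral>\<^sup>+\<omega>. ennreal (trunc r K (Y T \<omega>)) \<partial>M) + ennreal c * (\<integral>\<^sup>+\<omega>. abs_pow (Y T \<omega>) s \<partial>M)"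
      using Ymeas
    proof eventually_elim
      case (elim T)
      have m1: "(\<lambda>\<omega>. ennreal (trunc r K (Y T \<omega>))) \<in> borel_measurable M"
        using trunc_meas[OF f(1) K] elim by (auto intro!: measurable_compose[OF elim])
      have m2: "(\<lambda>\<omega>. abs_pow (Y T \<omega>) s) \<in> borel_measurable M"
        using elim by (auto intro!: measurable_compose[OF elim abs_pow_meas])
      have "(\<integral>\<^sup>+\<omega>. abs_pow (Y T \<omega>) r \<partial>M) \<le> (\<integral>\<^sup>+\<omega>. ennreal (trunc r K (Y T \<omega>)) + ennreal c * abs_pow (Y T \<omega>) s \<partial>M)"
        using trunc_ineq[OF rs K] Kc unfolding e_def by (intro nn_integral_mono) simp
      also have "\<dots> = (\<integral>\<^sup>+\<omega>. ennreal (trunc r K (Y T \<omega>)) \<partial>M) + (\<integral>\<^sup>+\<omega>. ennreal c * abs_pow (Y T \<omega>) s \<partial>M)"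
        using m1 m2 by (intro nn_integral_add) auto
      also have "(\<integral>\<^sup>+\<omega>. ennreal c * abs_pow (Y T \<omega>) s \<partial>M) = ennreal c * (\<integral>\<^sup>+\<omega>. abs_pow (Y T \<omega>) s \<partial>M)"
        using m2 by (rule nn_integral_cmult)
      finally show ?case .
    qed
    moreover have "\<forall>\<^sub>F T in at_top. (\<integral>\<^sup>+\<omega>. ennreal (trunc r K (Y T \<omega>)) \<partial>M) + ennreal c * (\<integral>\<^sup>+\<omega>. abs_pow (Y T \<omega>) s \<partial>M) < u"
      using order_tendstoD(2)[OF lim Lu] .
    ultimately show "\<forall>\<^sub>F T in at_top. (\<integral>\<^sup>+\<omega>. abs_pow (Y T \<omega>) r \<partial>M) < u"
      by eventually_elim (rule le_less_trans)
  qed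
qed

lemma h0_cont: "K > 0 \<Longrightarrow> continuous_on UNIV (\<lambda>y::real. min \<bar>y / K\<bar> 1)"
  by (intro continuous_intros) auto

lemma h0_bound: "\<bar>min \<bar>y / K\<bar> (1::real)\<bar> \<le> 1"
  by simp

lemma h0_integrable:
  fixes V :: "_ \<Rightarrow> real"
  assumes "prob_space P" "V \<in> borel_measurable P"
  shows "integrable P (\<lambda>\<omega>. min \<bar>V \<omega> / K\<bar> (1::real))"
proof -
  interpret prob_space P by fact
  show ?thesis using assms(2) by (intro integrable_const_bound[where B=1]) auto
qed

lemma small_zero:
  fixes W V :: "_ \<Rightarrow> real"
  assumes PP: "prob_space P" and PQ: "prob_space Q"
    and Wm[measurable]: "W \<in> borel_measurable P" and Vm[measurable]: "V \<in> borel_measurable Q"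
    and le: "\<And>K. K > 0 \<Longrightarrow> (\<integral>\<omega>. min \<bar>W \<omega> / 1\<bar> 1 \<partial>P) \<le> (\<integral>\<omega>. min \<bar>V \<omega> / K\<bar> 1 \<partial>Q)"
  shows "AE \<omega> in P. W \<omega> = 0"
proof -
  interpret P: prob_space P by fact
  interpret Q: prob_space Q by fact
  have "(\<lambda>n. \<integral>\<omega>. min \<bar>V \<omega> / real (Suc n)\<bar> 1 \<partial>Q) \<longlonglongrightarrow> (\<integral>\<omega>. 0 \<partial>Q)"
  proof (rule integral_dominated_convergence[where w="\<lambda>_. 1"])
    show "AE x in Q. (\<lambda>n. min \<bar>V x / real (Suc n)\<bar> 1) \<longlonglongrightarrow> 0"
    proof (rule AE_I2)
      fix x
      have "(\<lambda>n. V x / real (Suc n)) \<longlonglongrightarrow> 0"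
        by (intro tendsto_divide_0[OF tendsto_const] filterlim_at_top_imp_at_infinity filterlim_compose[OF filterlim_real_sequentially filterlim_Suc])
      then have "(\<lambda>n. min \<bar>V x / real (Suc n)\<bar> 1) \<longlonglongrightarrow> min \<bar>0\<bar> (1::real)"
        by (intro tendsto_intros)
      then show "(\<lambda>n. min \<bar>V x / real (Suc n)\<bar> 1) \<longlonglongrightarrow> 0" by simp
    qed
  qed auto
  then have lim: "(\<lambda>n. \<integral>\<omega>. min \<bar>V \<omega> / real (Suc n)\<bar> 1 \<partial>Q) \<longlonglongrightarrow> 0" by simp
  have "(\<integral>\<omega>. min \<bar>W \<omega> / 1\<bar> 1 \<partial>P) \<le> 0"
  proof (rule tendsto_lowerbound[OF lim])
    show "\<forall>\<^sub>F n in sequentially. (\<integral>\<omega>. min \<bar>W \<omega> / 1\<bar> 1 \<partial>P) \<le> (\<integral>\<omega>. min \<bar>V \<omega> / real (Suc n)\<bar> 1 \<partial>Q)"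
      by (intro always_eventually allI le) simp
  qed simp
  moreover have "(\<integral>\<omega>. min \<bar>W \<omega> / 1\<bar> 1 \<partial>P) \<ge> 0" by (rule Bochner_Integration.integral_nonneg) simp
  ultimately have "(\<integral>\<omega>. min \<bar>W \<omega> / 1\<bar> (1::real) \<partial>P) = 0" by (rule antisym)
  then have "AE \<omega> in P. min \<bar>W \<omega> / 1\<bar> (1::real) = 0"
    using integral_nonneg_eq_0_iff_AE[OF h0_integrable[OF PP Wm, of 1]] by simp
  then show ?thesis by eventually_elim (auto simp: min_def split: if_splits)
qed

lemma pos_moment:
  assumes "prob_space P" "W \<in> borel_measurable P" "nondegenerate P W"
  shows "(\<integral>\<^sup>+\<omega>. abs_pow (W \<omega>) q \<partial>P) > 0"
proof (rule ccontr)
  assume "\<not> ?thesis"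
  then have "(\<integral>\<^sup>+\<omega>. abs_pow (W \<omega>) q \<partial>P) = 0" by (simp add: not_less)
  then have "AE \<omega> in P. abs_pow (W \<omega>) q = 0"
    using assms(2) by (subst (asm) nn_integral_0_iff_AE) (auto intro: measurable_compose[OF _ abs_pow_meas])
  then have "AE \<omega> in P. W \<omega> = 0" by eventually_elim (rule abs_pow_zero_iff)
  then show False using assms(3) unfolding nondegenerate_def by blast
qed

lemma moment_rewrite:
  assumes "c > 0" "V \<in> borel_measurable M"
  shows "abs_moment M V q / ennreal (c powr q) = (\<integral>\<^sup>+\<omega>. abs_pow (V \<omega> / c) q \<partial>M)"
  using assms unfolding abs_moment_def
  by (subst nn_integral_divide[symmetric]) (auto simp: abs_pow_div intro: measurable_compose[OF _ abs_pow_meas])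

lemma h0_mono:
  fixes x c K :: real
  assumes "0 < K" "K \<le> c"
  shows "min \<bar>x / c\<bar> 1 \<le> min \<bar>x / K\<bar> 1"
proof -
  have "\<bar>x\<bar> / c \<le> \<bar>x\<bar> / K" using assms by (intro divide_left_mono) auto
  then have "\<bar>x / c\<bar> \<le> \<bar>x / K\<bar>" using assms by (simp add: abs_divide)
  then show ?thesis by (rule min.mono) simp
qed

context
  fixes M :: "'a measure" and N :: "'b measure"
    and X :: "real \<Rightarrow> 'a \<Rightarrow> real" and Z :: "real \<Rightarrow> 'b \<Rightarrow> real"
    and a :: "real \<Rightarrow> real"
  assumes PM: "prob_space M" and PN: "prob_space N"
    and Xm: "\<And>t. t \<ge> 0 \<Longrightarrow> X t \<in> borel_measurable M"
    and Zm: "\<And>t. t \<ge> 0 \<Longrightarrow> Z t \<in> borel_measurable N"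
    and nd: "\<And>t. t > 0 \<Longrightarrow> nondegenerate N (Z t)"
    and apos: "\<And>T. T > 0 \<Longrightarrow> a T > 0"
    and alim: "filterlim a at_top at_top"
    and fdd: "fdd_conv M X a N Z"
begin

lemma Z0_zero: "AE \<omega> in N. Z 0 \<omega> = 0"
proof (rule small_zero[OF PN PM Zm Xm])
  fix K :: real assume K: "K > 0"
  have g: "((\<lambda>T. \<integral>\<omega>. min \<bar>X (T * 0) \<omega> / a T / 1\<bar> 1 \<partial>M) \<longlongrightarrow> (\<integral>\<omega>. min \<bar>Z 0 \<omega> / 1\<bar> 1 \<partial>N)) at_top"
    by (rule fdd1[OF fdd order_refl h0_cont h0_bound]) simp
  have ev: "\<forall>\<^sub>F T in at_top. (\<integral>\<omega>. min \<bar>X (T * 0) \<omega> / a T / 1\<bar> 1 \<partial>M) \<le> (\<integral>\<omega>. min \<bar>X 0 \<omega> / K\<bar> 1 \<partial>M)"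
    using filterlim_at_top[THEN iffD1, OF alim, rule_format, of K]
  proof eventually_elim
    case (elim T)
    show ?case
    proof (intro integral_mono h0_integrable[OF PM] Xm order_refl)
      fix \<omega>
      show "min \<bar>X (T * 0) \<omega> / a T / 1\<bar> 1 \<le> min \<bar>X 0 \<omega> / K\<bar> (1::real)"
        using h0_mono[OF K elim, of "X 0 \<omega>"] by simp
    qed (auto intro!: Xm borel_measurable_divide)
  qed
  show "(\<integral>\<omega>. min \<bar>Z 0 \<omega> / 1\<bar> 1 \<partial>N) \<le> (\<integral>\<omega>. min \<bar>X 0 \<omega> / K\<bar> 1 \<partial>M)"
    by (rule tendsto_le[OF _ tendsto_const g ev]) simp
qed (simp_all)


lemma fin_pos:
  assumes s: "s \<noteq> 0" and sQ: "s \<in> moment_conv_set M X a N Z"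
    and A: "abs_moment N (Z 1) s < \<infinity>" and t: "t > 0"
  shows "abs_moment N (Z t) s < \<infinity>"
proof (rule ccontr)
  assume "\<not> ?thesis"
  then have Binf: "abs_moment N (Z t) s = \<infinity>" by (metis infinity_ennreal_def less_top)
  define U where "U T \<omega> = X (T * t) \<omega> / a T" for T \<omega>
  define V where "V T \<omega> = X (T * t) \<omega> / a (T * t)" for T \<omega>
  define \<rho> where "\<rho> T = a (T * t) / a T" for T
  have evpos: "\<forall>\<^sub>F T in at_top. (T::real) > 0" by (rule eventually_gt_at_top)
  have ft: "filterlim (\<lambda>T. T * t) at_top at_top"
    using t by (intro filterlim_at_top_mult_tendsto_pos[OF tendsto_const]) (auto simp: filterlim_ident)
  have Um: "U T \<in> borel_measurable M" if "T > 0" for T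
    unfolding U_def using that t by (auto intro!: borel_measurable_divide Xm)
  have Vm: "V T \<in> borel_measurable M" if "T > 0" for T
    unfolding V_def using that t by (auto intro!: borel_measurable_divide Xm)
  have \<rho>pos: "\<rho> T > 0" if "T > 0" for T
    unfolding \<rho>_def using that t apos by auto
  have UV: "U T \<omega> = \<rho> T * V T \<omega>" if "T > 0" for T \<omega>
    unfolding U_def V_def \<rho>_def using that t apos[of T] apos[of "T * t"] by (simp add: field_simps)
  have hB: "((\<lambda>T. \<integral>\<^sup>+\<omega>. abs_pow (U T \<omega>) s \<partial>M) \<longlongrightarrow> abs_moment N (Z t) s) at_top"
  proof -
    have "((\<lambda>T. abs_moment M (X (T * t)) s / ennreal (a T powr s)) \<longlongrightarrow> abs_moment N (Z t) s) at_top"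
      using sQ t unfolding moment_conv_set_def by auto
    moreover have "\<forall>\<^sub>F T in at_top. abs_moment M (X (T * t)) s / ennreal (a T powr s) = (\<integral>\<^sup>+\<omega>. abs_pow (U T \<omega>) s \<partial>M)"
    using evpos proof eventually_elim
      case (elim T)
      show ?case unfolding U_def using elim t by (intro moment_rewrite apos Xm) simp_all
    qed
    ultimately show ?thesis by (rule tendsto_cong[THEN iffD1, rotated])
  qed
  have hA: "((\<lambda>T. \<integral>\<^sup>+\<omega>. abs_pow (V T \<omega>) s \<partial>M) \<longlongrightarrow> abs_moment N (Z 1) s) at_top"
  proof -
    have "((\<lambda>T. abs_moment M (X (T * 1)) s / ennreal (a T powr s)) \<longlongrightarrow> abs_moment N (Z 1) s) at_top"
      using sQ unfolding moment_conv_set_def by (auto dest: spec[of _ 1])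
    from filterlim_compose[OF this ft]
    have "((\<lambda>T. abs_moment M (X (T * t)) s / ennreal (a (T * t) powr s)) \<longlongrightarrow> abs_moment N (Z 1) s) at_top"
      by simp
    moreover have "\<forall>\<^sub>F T in at_top. abs_moment M (X (T * t)) s / ennreal (a (T * t) powr s) = (\<integral>\<^sup>+\<omega>. abs_pow (V T \<omega>) s \<partial>M)"
    using evpos proof eventually_elim
      case (elim T)
      show ?case unfolding V_def using elim t by (intro moment_rewrite apos Xm) simp_all
    qed
    ultimately show ?thesis by (rule tendsto_cong[THEN iffD1, rotated])
  qed
  have rel: "\<forall>\<^sub>F T in at_top. (\<integral>\<^sup>+\<omega>. abs_pow (U T \<omega>) s \<partial>M) = ennreal (\<rho> T powr s) * (\<integral>\<^sup>+\<omega>. abs_pow (V T \<omega>) s \<partial>M)"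
    using evpos
  proof eventually_elim
    case (elim T)
    have "(\<integral>\<^sup>+\<omega>. abs_pow (U T \<omega>) s \<partial>M) = (\<integral>\<^sup>+\<omega>. ennreal (\<rho> T powr s) * abs_pow (V T \<omega>) s \<partial>M)"
      using UV[OF elim] abs_pow_mult[OF \<rho>pos[OF elim]] by simp
    also have "\<dots> = ennreal (\<rho> T powr s) * (\<integral>\<^sup>+\<omega>. abs_pow (V T \<omega>) s \<partial>M)"
      by (rule nn_integral_cmult) (rule measurable_compose[OF Vm[OF elim] abs_pow_meas])
    finally show ?case .
  qed
  have Apos: "abs_moment N (Z 1) s > 0"
    unfolding abs_moment_def by (rule pos_moment[OF PN Zm nd]) auto
  have claim: "\<forall>\<^sub>F T in at_top. \<rho> T powr s > K" if K: "K > 0" for K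
  proof -
    define Ar where "Ar = enn2real (abs_moment N (Z 1) s) + 1"
    have Ar: "Ar > 0" unfolding Ar_def by (rule add_nonneg_pos) simp_all
    have "abs_moment N (Z 1) s = ennreal (enn2real (abs_moment N (Z 1) s))"
      using A by (simp add: less_top ennreal_enn2real)
    also have "\<dots> < ennreal Ar" unfolding Ar_def by (subst ennreal_less_iff) auto
    finally have e1: "\<forall>\<^sub>F T in at_top. (\<integral>\<^sup>+\<omega>. abs_pow (V T \<omega>) s \<partial>M) < ennreal Ar"
      by (rule order_tendstoD(2)[OF hA])
    have e2: "\<forall>\<^sub>F T in at_top. ennreal (K * Ar) < (\<integral>\<^sup>+\<omega>. abs_pow (U T \<omega>) s \<partial>M)"
      by (rule order_tendstoD(1)[OF hB]) (simp add: Binf)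
    show ?thesis using e1 e2 rel
    proof eventually_elim
      case (elim T)
      show ?case
      proof (rule ccontr)
        assume "\<not> K < \<rho> T powr s"
        then have "ennreal (\<rho> T powr s) \<le> ennreal K" by (intro ennreal_leI) simp
        then have "ennreal (\<rho> T powr s) * (\<integral>\<^sup>+\<omega>. abs_pow (V T \<omega>) s \<partial>M) \<le> ennreal K * ennreal Ar"
          using elim(1) by (intro mult_mono) auto
        then show False using elim(2,3) K Ar by (simp add: ennreal_mult)
      qed
    qed
  qed
  show False
  proof (cases "s > 0")
    case True
    have big: "\<forall>\<^sub>F T in at_top. \<rho> T \<ge> K" if K: "K > 0" for K
    proof -
      have "K powr s > 0" using K by simp
      from claim[OF this] evpos show ?thesis
      proof eventually_elim
        case (elim T)
        show ?case
        proof (rule ccontr)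
          assume "\<not> K \<le> \<rho> T"
          then have "\<rho> T powr s \<le> K powr s" using \<rho>pos[OF elim(2)] True by (intro powr_mono2) auto
          then show False using elim(1) by simp
        qed
      qed
    qed
    have "AE \<omega> in N. Z 1 \<omega> = 0"
    proof (rule small_zero[OF PN PN Zm Zm])
      fix K :: real assume K: "K > 0"
      have g: "((\<lambda>T. \<integral>\<omega>. min \<bar>X (T * t) \<omega> / a (T * t) / 1\<bar> 1 \<partial>M) \<longlongrightarrow> (\<integral>\<omega>. min \<bar>Z 1 \<omega> / 1\<bar> 1 \<partial>N)) at_top"
        by (rule fdd1_comp[OF fdd t h0_cont h0_bound]) simp
      have f: "((\<lambda>T. \<integral>\<omega>. min \<bar>X (T * t) \<omega> / a T / K\<bar> 1 \<partial>M) \<longlongrightarrow> (\<integral>\<omega>. min \<bar>Z t \<omega> / K\<bar> 1 \<partial>N)) at_top"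
        using t by (intro fdd1[OF fdd _ h0_cont[OF K] h0_bound]) simp
      have ev: "\<forall>\<^sub>F T in at_top. (\<integral>\<omega>. min \<bar>X (T * t) \<omega> / a (T * t) / 1\<bar> 1 \<partial>M) \<le> (\<integral>\<omega>. min \<bar>X (T * t) \<omega> / a T / K\<bar> 1 \<partial>M)"
        using big[OF K] evpos
      proof eventually_elim
        case (elim T)
        show ?case
        proof (intro integral_mono)
          show "integrable M (\<lambda>\<omega>. min \<bar>X (T * t) \<omega> / a (T * t) / 1\<bar> (1::real))"
            using h0_integrable[OF PM Vm[OF elim(2)]] unfolding V_def .
          show "integrable M (\<lambda>\<omega>. min \<bar>X (T * t) \<omega> / a T / K\<bar> (1::real))"
            using h0_integrable[OF PM Um[OF elim(2)]] unfolding U_def .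
          fix \<omega>
          have "X (T * t) \<omega> / a (T * t) / 1 = U T \<omega> / \<rho> T"
            using UV[OF elim(2), of \<omega>] \<rho>pos[OF elim(2)] unfolding V_def by simp
          moreover have "X (T * t) \<omega> / a T / K = U T \<omega> / K" by (simp add: U_def)
          ultimately show "min \<bar>X (T * t) \<omega> / a (T * t) / 1\<bar> 1 \<le> min \<bar>X (T * t) \<omega> / a T / K\<bar> (1::real)"
            by (simp only:) (rule h0_mono[OF K elim(1)])
        qed
      qed
      show "(\<integral>\<omega>. min \<bar>Z 1 \<omega> / 1\<bar> 1 \<partial>N) \<le> (\<integral>\<omega>. min \<bar>Z t \<omega> / K\<bar> 1 \<partial>N)"
        by (rule tendsto_le[OF _ f g ev]) simp
    qed (use t in simp_all)
    then show False using nd[of 1] unfolding nondegenerate_def by auto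
  next
    case False
    then have sneg: "s < 0" using s by simp
    have small: "\<forall>\<^sub>F T in at_top. \<rho> T \<le> 1 / K" if K: "K > 0" for K
    proof -
      have "(1 / K) powr s > 0" using K by simp
      from claim[OF this] evpos show ?thesis
      proof eventually_elim
        case (elim T)
        show ?case
        proof (rule ccontr)
          assume "\<not> \<rho> T \<le> 1 / K"
          then have "\<rho> T powr s \<le> (1 / K) powr s" using K sneg by (intro powr_mono2') auto
          then show False using elim(1) by simp
        qed
      qed
    qed
    have "AE \<omega> in N. Z t \<omega> = 0"
    proof (rule small_zero[OF PN PN Zm Zm])
      fix K :: real assume K: "K > 0"
      have g: "((\<lambda>T. \<integral>\<omega>. min \<bar>X (T * t) \<omega> / a T / 1\<bar> 1 \<partial>M) \<longlongrightarrow> (\<integral>\<omega>. min \<bar>Z t \<omega> / 1\<bar> 1 \<partial>N)) at_top"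
        using t by (intro fdd1[OF fdd _ h0_cont h0_bound]) simp_all
      have f: "((\<lambda>T. \<integral>\<omega>. min \<bar>X (T * t) \<omega> / a (T * t) / K\<bar> 1 \<partial>M) \<longlongrightarrow> (\<integral>\<omega>. min \<bar>Z 1 \<omega> / K\<bar> 1 \<partial>N)) at_top"
        by (rule fdd1_comp[OF fdd t h0_cont[OF K] h0_bound])
      have ev: "\<forall>\<^sub>F T in at_top. (\<integral>\<omega>. min \<bar>X (T * t) \<omega> / a T / 1\<bar> 1 \<partial>M) \<le> (\<integral>\<omega>. min \<bar>X (T * t) \<omega> / a (T * t) / K\<bar> 1 \<partial>M)"
        using small[OF K] evpos
      proof eventually_elim
        case (elim T)
        show ?case
        proof (intro integral_mono)
          show "integrable M (\<lambda>\<omega>. min \<bar>X (T * t) \<omega> / a T / 1\<bar> (1::real))"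
            using h0_integrable[OF PM Um[OF elim(2)]] unfolding U_def .
          show "integrable M (\<lambda>\<omega>. min \<bar>X (T * t) \<omega> / a (T * t) / K\<bar> (1::real))"
            using h0_integrable[OF PM Vm[OF elim(2)]] unfolding V_def .
          fix \<omega>
          have "X (T * t) \<omega> / a T / 1 = V T \<omega> / (1 / \<rho> T)"
            using UV[OF elim(2), of \<omega>] \<rho>pos[OF elim(2)] unfolding U_def by simp
          moreover have "K \<le> 1 / \<rho> T" using elim(1) K \<rho>pos[OF elim(2)] by (simp add: field_simps)
          moreover have "X (T * t) \<omega> / a (T * t) / K = V T \<omega> / K" by (simp add: V_def)
          ultimately show "min \<bar>X (T * t) \<omega> / a T / 1\<bar> 1 \<le> min \<bar>X (T * t) \<omega> / a (T * t) / K\<bar> (1::real)"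
            by (simp only:) (rule h0_mono[OF K])
        qed
      qed
      show "(\<integral>\<omega>. min \<bar>Z t \<omega> / 1\<bar> 1 \<partial>N) \<le> (\<integral>\<omega>. min \<bar>Z 1 \<omega> / K\<bar> 1 \<partial>N)"
        by (rule tendsto_le[OF _ f g ev]) simp
    qed (use t in simp_all)
    then show False using nd[OF t] unfolding nondegenerate_def by auto
  qed
qed


lemma moment_at_zero: "abs_moment N (Z 0) q = abs_pow 0 q"
proof -
  interpret N: prob_space N by (rule PN)
  have "abs_moment N (Z 0) q = (\<integral>\<^sup>+\<omega>. abs_pow 0 q \<partial>N)"
    unfolding abs_moment_def using Z0_zero
    by (intro nn_integral_cong_AE) (auto elim!: AE_mp)
  also have "\<dots> = abs_pow 0 q" by (simp add: N.emeasure_space_1)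
  finally show ?thesis .
qed

lemma main_case:
  assumes rs: "(0 < r \<and> r < s) \<or> (s < r \<and> r < 0)"
    and A: "abs_moment N (Z 1) s < \<infinity>" and sQ: "s \<in> moment_conv_set M X a N Z"
  shows "r \<in> moment_conv_set M X a N Z"
  unfolding moment_conv_set_def
proof (intro CollectI allI impI)
  note f = rs_facts[OF rs]
  fix t :: real assume t: "t \<ge> 0"
  have evpos: "\<forall>\<^sub>F T in at_top. (T::real) > 0" by (rule eventually_gt_at_top)
  have rew: "\<forall>\<^sub>F T in at_top. abs_moment M (X (T * t)) q / ennreal (a T powr q) = (\<integral>\<^sup>+\<omega>. abs_pow (X (T * t) \<omega> / a T) q \<partial>M)" for q
    using evpos
  proof eventually_elim
    case (elim T)
    show ?case using elim t by (intro moment_rewrite apos Xm) simp_all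
  qed
  have Ymeas: "\<forall>\<^sub>F T in at_top. (\<lambda>\<omega>. X (T * t) \<omega> / a T) \<in> borel_measurable M"
    using evpos by eventually_elim (use t in \<open>auto intro!: borel_measurable_divide Xm\<close>)
  have "((\<lambda>T. abs_moment M (X (T * t)) s / ennreal (a T powr s)) \<longlongrightarrow> abs_moment N (Z t) s) at_top"
    using sQ t unfolding moment_conv_set_def by auto
  then have mom: "((\<lambda>T. \<integral>\<^sup>+\<omega>. abs_pow (X (T * t) \<omega> / a T) s \<partial>M) \<longlongrightarrow> (\<integral>\<^sup>+\<omega>. abs_pow (Z t \<omega>) s \<partial>N)) at_top"
    unfolding abs_moment_def[of N] using rew[of s] by (rule tendsto_cong[THEN iffD1, rotated])
  have fin: "abs_moment N (Z t) s < \<infinity> \<or> abs_moment N (Z t) r = \<infinity>"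
  proof (cases "t > 0")
    case True
    then show ?thesis using fin_pos[OF f(2) sQ A True] by simp
  next
    case False
    then have t0: "t = 0" using t by simp
    show ?thesis
    proof (cases "0 < r")
      case True
      then have "0 < s" using f(4) by simp
      then show ?thesis unfolding t0 moment_at_zero by (simp add: abs_pow_def)
    next
      case False
      then have "r < 0" using f(1) by simp
      then show ?thesis unfolding t0 moment_at_zero by (simp add: abs_pow_def)
    qed
  qed
  have "((\<lambda>T. \<integral>\<^sup>+\<omega>. abs_pow (X (T * t) \<omega> / a T) r \<partial>M) \<longlongrightarrow> (\<integral>\<^sup>+\<omega>. abs_pow (Z t \<omega>) r \<partial>N)) at_top"
    by (rule main_lemma[OF PM PN Ymeas Zm[OF t] fdd_wconv[OF fdd t] rs mom fin[unfolded abs_moment_def]])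
  then show "((\<lambda>T. abs_moment M (X (T * t)) r / ennreal (a T powr r)) \<longlongrightarrow> abs_moment N (Z t) r) at_top"
    unfolding abs_moment_def[of N] using rew[of r]
    by (rule tendsto_cong[THEN iffD2, rotated])
qed

end

theorem proposition2p2:
  fixes M :: "'a measure" and N :: "'b measure"
    and X :: "real \<Rightarrow> 'a \<Rightarrow> real" and Z :: "real \<Rightarrow> 'b \<Rightarrow> real"
    and a :: "real \<Rightarrow> real"
  assumes "prob_space M" and "prob_space N"
    and "\<And>t. t \<ge> 0 \<Longrightarrow> X t \<in> borel_measurable M"
    and "\<And>t. t \<ge> 0 \<Longrightarrow> Z t \<in> borel_measurable N"
    and "\<And>t. t > 0 \<Longrightarrow> nondegenerate N (Z t)"
    and "\<And>T. T > 0 \<Longrightarrow> a T > 0"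
    and "filterlim a at_top at_top"
    and "fdd_conv M X a N Z"
  shows "(\<forall>r s. 0 < r \<and> r < s \<and> abs_moment N (Z 1) s < \<infinity> \<and> s \<in> moment_conv_set M X a N Z
              \<longrightarrow> r \<in> moment_conv_set M X a N Z)
       \<and> (\<forall>r s. s < r \<and> r < 0 \<and> abs_moment N (Z 1) s < \<infinity> \<and> s \<in> moment_conv_set M X a N Z
              \<longrightarrow> r \<in> moment_conv_set M X a N Z)"
  using main_case[OF assms] by blast

end
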